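(* Let $G$ be a simple cubic graph and $(G',r)$ be constructed from $G$ as described in the context. Then there exists a minimum-size vector connectivity set $S$ for $(G',r)$ that contains no vertex of the form $w_{x,e}$ or $w_e$ (for $e\in E(G)$, $x$ an endpoint of $e$).
   Context: Construction of $G'$ from a cubic graph $G$: start with $G$. (1) For each edge $e=xy$ of $G$, delete $xy$, add three new vertices $w_{x,e},w_e,w_{y,e}$ and the edges $xw_{x,e}, w_{x,e}w_e, w_ew_{y,e}, w_{y,e}y$. (2) For each edge $e=xy$ of $G$, add two new vertices $z_{x,e},z_{y,e}$ and the edges $w_{x,e}z_{x,e}, z_{x,e}w_e, w_ez_{y,e}, z_{y,e}w_{y,e}$. (3) For every vertex $x$ of $G$ with incident edges $e,f,g$, add the edges $w_{x,e}w_{x,f}, w_{x,e}w_{x,g}, w_{x,f}w_{x,g}$. Requirements: for every edge $e=xy$ of $G$, $r(w_{x,e})=r(w_{y,e})=4$ and $r(w_e)=3$; $r(v')=0$ for all other vertices of $G'$. For $S\subseteq V(G')$ and $v\in V(G')\setminus S$, a $v$--$S$ fan of order $k$ is a collection of $k$ paths, each connecting $v$ to a vertex of $S$, pairwise vertex-disjoint except at $v$; $v$ is $k$-linked to $S$ if such a fan exists. A vector connectivity set for $(G',r)$ is a set $S$ such that every $v\in V(G')\setminus S$ is $r(v)$-linked to $S$. *)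

theory Defs
  imports Main
begin

definition simple_graph :: "'v set \<Rightarrow> ('v \<Rightarrow> 'v \<Rightarrow> bool) \<Rightarrow> bool" where
  "simple_graph V E \<longleftrightarrow> finite V \<and> (\<forall>x y. E x y \<longrightarrow> x \<in> V \<and> y \<in> V)
     \<and> (\<forall>x y. E x y \<longrightarrow> E y x) \<and> (\<forall>x. \<not> E x x)"

definition cubic_graph :: "'v set \<Rightarrow> ('v \<Rightarrow> 'v \<Rightarrow> bool) \<Rightarrow> bool" where
  "cubic_graph V E \<longleftrightarrow> simple_graph V E \<and> (\<forall>x\<in>V. card {y. E x y} = 3)"

definition graph_edges :: "('v \<Rightarrow> 'v \<Rightarrow> bool) \<Rightarrow> 'v set set" where
  "graph_edges E = {{x, y} | x y. E x y}"

definition is_path :: "'v set \<Rightarrow> ('v \<Rightarrow> 'v \<Rightarrow> bool) \<Rightarrow> 'v list \<Rightarrow> bool" where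
  "is_path Vs Adj p \<longleftrightarrow> p \<noteq> [] \<and> set p \<subseteq> Vs \<and> distinct p \<and>
     (\<forall>i. Suc i < length p \<longrightarrow> Adj (p ! i) (p ! Suc i))"

definition is_fan :: "'v set \<Rightarrow> ('v \<Rightarrow> 'v \<Rightarrow> bool) \<Rightarrow> 'v \<Rightarrow> 'v set \<Rightarrow> nat \<Rightarrow> 'v list list \<Rightarrow> bool" where
  "is_fan Vs Adj v S k ps \<longleftrightarrow> length ps = k \<and>
     (\<forall>p\<in>set ps. is_path Vs Adj p \<and> hd p = v \<and> last p \<in> S) \<and>
     (\<forall>i<k. \<forall>j<k. i \<noteq> j \<longrightarrow> set (ps ! i) \<inter> set (ps ! j) = {v})"

definition k_linked :: "'v set \<Rightarrow> ('v \<Rightarrow> 'v \<Rightarrow> bool) \<Rightarrow> nat \<Rightarrow> 'v \<Rightarrow> 'v set \<Rightarrow> bool" where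
  "k_linked Vs Adj k v S \<longleftrightarrow> (\<exists>ps. is_fan Vs Adj v S k ps)"

definition vector_connectivity_set ::
  "'v set \<Rightarrow> ('v \<Rightarrow> 'v \<Rightarrow> bool) \<Rightarrow> ('v \<Rightarrow> nat) \<Rightarrow> 'v set \<Rightarrow> bool" where
  "vector_connectivity_set Vs Adj r S \<longleftrightarrow> S \<subseteq> Vs \<and>
     (\<forall>v\<in>Vs - S. k_linked Vs Adj (r v) v S)"

text \<open>Orig x = x; WX x e = w_{x,e}; WE e = w_e; Z x e = z_{x,e}.\<close>
datatype 'a gvert = Orig 'a | WX 'a "'a set" | WE "'a set" | Z 'a "'a set"

definition Gp_verts :: "'a set \<Rightarrow> ('a \<Rightarrow> 'a \<Rightarrow> bool) \<Rightarrow> 'a gvert set" where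
  "Gp_verts V E = Orig ` V
     \<union> {WX x e | x e. e \<in> graph_edges E \<and> x \<in> e}
     \<union> WE ` graph_edges E
     \<union> {Z x e | x e. e \<in> graph_edges E \<and> x \<in> e}"

definition Gp_adj0 :: "('a \<Rightarrow> 'a \<Rightarrow> bool) \<Rightarrow> 'a gvert \<Rightarrow> 'a gvert \<Rightarrow> bool" where
  "Gp_adj0 E u w \<longleftrightarrow>
     (\<exists>x e. e \<in> graph_edges E \<and> x \<in> e \<and>
        ((u = Orig x \<and> w = WX x e) \<or> (u = WX x e \<and> w = WE e) \<or>
         (u = WX x e \<and> w = Z x e) \<or> (u = Z x e \<and> w = WE e)))
   \<or> (\<exists>x e f. e \<in> graph_edges E \<and> f \<in> graph_edges E \<and> x \<in> e \<and> x \<in> f \<and> e \<noteq> f \<and>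
        u = WX x e \<and> w = WX x f)"

definition Gp_adj :: "('a \<Rightarrow> 'a \<Rightarrow> bool) \<Rightarrow> 'a gvert \<Rightarrow> 'a gvert \<Rightarrow> bool" where
  "Gp_adj E u w \<longleftrightarrow> Gp_adj0 E u w \<or> Gp_adj0 E w u"

fun Gp_r :: "'a gvert \<Rightarrow> nat" where
  "Gp_r (WX x e) = 4"
| "Gp_r (WE e) = 3"
| "Gp_r _ = 0"

end

theory Submission imports Defs begin

fun eo :: "'a gvert \<Rightarrow> 'a set option" where
  "eo (Orig _) = None" | "eo (WX _ e) = Some e" | "eo (WE e) = Some e" | "eo (Z _ e) = Some e"

lemma adj_sym: "Gp_adj E u w = Gp_adj E w u" by (auto simp: Gp_adj_def)

lemma adjI:
  "e \<in> graph_edges E \<Longrightarrow> x \<in> e \<Longrightarrow> Gp_adj E (Orig x) (WX x e)"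
  "e \<in> graph_edges E \<Longrightarrow> x \<in> e \<Longrightarrow> Gp_adj E (WX x e) (Orig x)"
  "e \<in> graph_edges E \<Longrightarrow> x \<in> e \<Longrightarrow> Gp_adj E (WX x e) (WE e)"
  "e \<in> graph_edges E \<Longrightarrow> x \<in> e \<Longrightarrow> Gp_adj E (WE e) (WX x e)"
  "e \<in> graph_edges E \<Longrightarrow> x \<in> e \<Longrightarrow> Gp_adj E (WX x e) (Z x e)"
  "e \<in> graph_edges E \<Longrightarrow> x \<in> e \<Longrightarrow> Gp_adj E (Z x e) (WX x e)"
  "e \<in> graph_edges E \<Longrightarrow> x \<in> e \<Longrightarrow> Gp_adj E (Z x e) (WE e)"
  "e \<in> graph_edges E \<Longrightarrow> x \<in> e \<Longrightarrow> Gp_adj E (WE e) (Z x e)"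
  "e \<in> graph_edges E \<Longrightarrow> f \<in> graph_edges E \<Longrightarrow> x \<in> e \<Longrightarrow> x \<in> f \<Longrightarrow> e \<noteq> f \<Longrightarrow> Gp_adj E (WX x e) (WX x f)"
  by (auto simp: Gp_adj_def Gp_adj0_def)

lemma adj_Z: "Gp_adj E (Z x e) w \<Longrightarrow> w = WX x e \<or> w = WE e"
  by (auto simp: Gp_adj_def Gp_adj0_def)
lemma adj_Orig: "Gp_adj E (Orig x) w \<Longrightarrow> \<exists>f. w = WX x f \<and> f \<in> graph_edges E \<and> x \<in> f"
  by (auto simp: Gp_adj_def Gp_adj0_def)
lemma adj_WE: "Gp_adj E (WE e) w \<Longrightarrow> \<exists>u\<in>e. w = WX u e \<or> w = Z u e"
  by (auto simp: Gp_adj_def Gp_adj0_def)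
lemma adj_WX: "Gp_adj E (WX x e) w \<Longrightarrow> w = Orig x \<or> w = WE e \<or> w = Z x e \<or> (\<exists>f. w = WX x f \<and> f \<in> graph_edges E \<and> x \<in> f \<and> f \<noteq> e)"
  by (auto simp: Gp_adj_def Gp_adj0_def)

lemma path2: "u \<in> Vs \<Longrightarrow> w \<in> Vs \<Longrightarrow> u \<noteq> w \<Longrightarrow> Adj u w \<Longrightarrow> is_path Vs Adj [u,w]"
  by (auto simp: is_path_def less_Suc_eq)
lemma path_cons: "is_path Vs Adj p \<Longrightarrow> u \<in> Vs \<Longrightarrow> u \<notin> set p \<Longrightarrow> Adj u (hd p) \<Longrightarrow> is_path Vs Adj (u # p)"
  apply (auto simp: is_path_def nth_Cons split: nat.splits)
  by (metis hd_conv_nth)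

lemma path_second:
  assumes "is_path Vs Adj p" "hd p = v" "last p \<in> S" "v \<notin> S"
  shows "length p \<ge> 2 \<and> Adj v (p!1) \<and> p!1 \<in> set p"
proof -
  have ne: "p \<noteq> []" using assms by (auto simp: is_path_def)
  have "length p \<noteq> 1"
  proof
    assume "length p = 1"
    then have "last p = hd p" using ne by (cases p) auto
    then show False using assms by auto
  qed
  moreover have "length p > 0" using ne by simp
  ultimately have l: "length p \<ge> 2" by linarith
  then have "Adj (p!0) (p!1)" using assms(1) by (auto simp: is_path_def)
  moreover have "p!0 = v" using assms(2) ne by (simp add: hd_conv_nth)
  ultimately show ?thesis using l by auto
qed

lemma path_third:
  assumes "is_path Vs Adj p" "hd p = v" "last p \<in> S" "v \<notin> S" "p!1 \<notin> S"
  shows "Adj (p!1) (p!2) \<and> p!2 \<noteq> v \<and> p!2 \<in> set p"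
proof -
  have ne: "p \<noteq> []" using assms by (auto simp: is_path_def)
  have l: "length p \<ge> 2" using path_second[OF assms(1-4)] by auto
  have "length p \<noteq> 2"
  proof
    assume "length p = 2"
    then have "last p = p!1" using ne by (simp add: last_conv_nth)
    then show False using assms by auto
  qed
  then have l3: "length p \<ge> 3" using l by auto
  then have "Suc 1 < length p" by simp
  then have "Adj (p!1) (p!Suc 1)" using assms(1) unfolding is_path_def by blast
  then have "Adj (p!1) (p!2)" by (simp add: numeral_2_eq_2)
  moreover have "p!0 = v" using assms(2) ne by (simp add: hd_conv_nth)
  moreover have "p!2 \<noteq> p!0" using assms(1) l3 by (auto simp: is_path_def nth_eq_iff_index_eq)
  ultimately show ?thesis using l3 by auto
qed

lemma fan_cut:
  assumes "is_fan Vs Adj v S k ps" "finite C" "v \<notin> C" "\<forall>p\<in>set ps. set p \<inter> C \<noteq> {}"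
  shows "k \<le> card C"
proof -
  have len: "length ps = k" using assms(1) by (simp add: is_fan_def)
  have "\<forall>i<k. \<exists>c. c \<in> set (ps!i) \<inter> C"
  proof (intro allI impI)
    fix i assume "i < k"
    then have "ps!i \<in> set ps" using len by simp
    then show "\<exists>c. c \<in> set (ps!i) \<inter> C" using assms(4) by blast
  qed
  then obtain h where h: "\<forall>i<k. h i \<in> set (ps!i) \<inter> C" by metis
  have "inj_on h {..<k}"
  proof (rule inj_onI)
    fix i j assume ij: "i \<in> {..<k}" "j \<in> {..<k}" "h i = h j"
    show "i = j"
    proof (rule ccontr)
      assume "i \<noteq> j"
      then have e: "set (ps!i) \<inter> set (ps!j) = {v}" using assms(1) ij unfolding is_fan_def by blast
      have "h i \<in> set (ps!i)" "h j \<in> set (ps!j)" "h i \<in> C" using h ij by auto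
      then have "h i \<in> set (ps!i) \<inter> set (ps!j) \<and> h i \<in> C" using ij(3) by simp
      then show False using assms(3) e by (metis IntD2 singletonD)
    qed
  qed
  moreover have "h ` {..<k} \<subseteq> C" using h by auto
  ultimately have "card {..<k} \<le> card C" using assms(2) by (meson card_inj_on_le)
  then show ?thesis by simp
qed

lemma fan_Nil: "is_fan Vs Adj v S 0 []" by (simp add: is_fan_def)

lemma fan_Cons:
  assumes "is_fan Vs Adj v S k ps" "is_path Vs Adj p" "hd p = v" "last p \<in> S"
    "\<forall>q\<in>set ps. set p \<inter> set q = {v}"
  shows "is_fan Vs Adj v S (Suc k) (p # ps)"
  unfolding is_fan_def
proof (intro conjI)
  show "length (p # ps) = Suc k" using assms(1) by (simp add: is_fan_def)
  show "\<forall>q\<in>set (p # ps). is_path Vs Adj q \<and> hd q = v \<and> last q \<in> S" using assms(1-4) by (auto simp: is_fan_def)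
  show "\<forall>i<Suc k. \<forall>j<Suc k. i \<noteq> j \<longrightarrow> set ((p # ps) ! i) \<inter> set ((p # ps) ! j) = {v}"
  proof (intro allI impI)
    fix i j assume ij: "i < Suc k" "j < Suc k" "i \<noteq> j"
    have len: "length ps = k" using assms(1) by (simp add: is_fan_def)
    show "set ((p # ps) ! i) \<inter> set ((p # ps) ! j) = {v}"
    proof (cases i)
      case 0
      then obtain j' where "j = Suc j'" "j' < k" using ij by (cases j) auto
      then show ?thesis using 0 assms(5) len by (simp add: nth_mem)
    next
      case (Suc i')
      show ?thesis
      proof (cases j)
        case 0
        have "ps ! i' \<in> set ps" using Suc ij len by simp
        then have "set p \<inter> set (ps ! i') = {v}" using assms(5) by blast
        then show ?thesis using Suc 0 by (simp add: Int_commute)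
      next
        case (Suc j')
        then show ?thesis using \<open>i = Suc i'\<close> ij assms(1) by (simp add: is_fan_def)
      qed
    qed
  qed
qed

lemma fan3I:
  assumes "\<forall>p\<in>{p1,p2,p3}. is_path Vs Adj p \<and> hd p = v \<and> last p \<in> S"
    "set p1 \<inter> set p2 = {v}" "set p1 \<inter> set p3 = {v}" "set p2 \<inter> set p3 = {v}"
  shows "is_fan Vs Adj v S 3 [p1,p2,p3]"
proof -
  have "is_fan Vs Adj v S (Suc (Suc (Suc 0))) [p1,p2,p3]"
    using assms by (intro fan_Cons fan_Nil) auto
  moreover have "(3::nat) = Suc (Suc (Suc 0))" by simp
  ultimately show ?thesis by metis
qed

lemma fan4I:
  assumes "\<forall>p\<in>{p1,p2,p3,p4}. is_path Vs Adj p \<and> hd p = v \<and> last p \<in> S"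
    "set p1 \<inter> set p2 = {v}" "set p1 \<inter> set p3 = {v}" "set p2 \<inter> set p3 = {v}"
    "set p1 \<inter> set p4 = {v}" "set p2 \<inter> set p4 = {v}" "set p3 \<inter> set p4 = {v}"
  shows "is_fan Vs Adj v S 4 [p1,p2,p3,p4]"
proof -
  have "is_fan Vs Adj v S (Suc (Suc (Suc (Suc 0)))) [p1,p2,p3,p4]"
    using assms by (intro fan_Cons fan_Nil) auto
  moreover have "(4::nat) = Suc (Suc (Suc (Suc 0)))" by simp
  ultimately show ?thesis by metis
qed

lemma path3: "u \<in> Vs \<Longrightarrow> v \<in> Vs \<Longrightarrow> w \<in> Vs \<Longrightarrow> u \<noteq> v \<Longrightarrow> u \<noteq> w \<Longrightarrow> v \<noteq> w
  \<Longrightarrow> Adj u v \<Longrightarrow> Adj v w \<Longrightarrow> is_path Vs Adj [u,v,w]"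
  by (rule path_cons) (auto intro: path2)

lemma path4: "u \<in> Vs \<Longrightarrow> v \<in> Vs \<Longrightarrow> w \<in> Vs \<Longrightarrow> t \<in> Vs \<Longrightarrow> u \<noteq> v \<Longrightarrow> u \<noteq> w \<Longrightarrow> v \<noteq> w
  \<Longrightarrow> u \<noteq> t \<Longrightarrow> v \<noteq> t \<Longrightarrow> w \<noteq> t
  \<Longrightarrow> Adj u v \<Longrightarrow> Adj v w \<Longrightarrow> Adj w t \<Longrightarrow> is_path Vs Adj [u,v,w,t]"
  by (rule path_cons) (auto intro: path3)

lemma disj_helper: "v \<in> A \<Longrightarrow> v \<in> B \<Longrightarrow> A \<subseteq> insert v {t. P t} \<Longrightarrow> B \<subseteq> insert v {t. Q t}
  \<Longrightarrow> (\<forall>t. P t \<longrightarrow> \<not> Q t) \<Longrightarrow> A \<inter> B = {v}"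
  by blast

lemma k0: "k_linked Vs Adj 0 v S"
  unfolding k_linked_def is_fan_def by (rule exI[of _ "[]"]) simp

fun own :: "'a gvert \<Rightarrow> 'a option" where
  "own (Orig x) = Some x" | "own (WX x _) = Some x" | "own (WE _) = None" | "own (Z x _) = Some x"

locale cg = fixes V :: "'a set" and E :: "'a \<Rightarrow> 'a \<Rightarrow> bool"
  assumes cub: "cubic_graph V E"
begin

lemma sg: "finite V" "E x y \<Longrightarrow> x \<in> V" "E x y \<Longrightarrow> y \<in> V" "E x y \<Longrightarrow> E y x" "\<not> E x x"
  using cub unfolding cubic_graph_def simple_graph_def by blast+

lemma deg: "x \<in> V \<Longrightarrow> card {y. E x y} = 3" using cub unfolding cubic_graph_def by blast

lemma edge_other: assumes "e \<in> graph_edges E" "x \<in> e" shows "\<exists>y. e = {x,y} \<and> E x y"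
proof -
  obtain u v where "e = {u,v}" "E u v" using assms(1) unfolding graph_edges_def by blast
  then show ?thesis using assms(2) sg(4) by (auto simp: insert_commute)
qed

lemma edge_V: "e \<in> graph_edges E \<Longrightarrow> x \<in> e \<Longrightarrow> x \<in> V" using edge_other sg(2) by blast

lemma edge_eq: "E x y \<Longrightarrow> {x,y} \<in> graph_edges E" unfolding graph_edges_def by blast

lemma verts:
  "e \<in> graph_edges E \<Longrightarrow> x \<in> e \<Longrightarrow> WX x e \<in> Gp_verts V E"
  "e \<in> graph_edges E \<Longrightarrow> WE e \<in> Gp_verts V E"
  "e \<in> graph_edges E \<Longrightarrow> x \<in> e \<Longrightarrow> Z x e \<in> Gp_verts V E"
  "x \<in> V \<Longrightarrow> Orig x \<in> Gp_verts V E"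
  unfolding Gp_verts_def by blast+

lemma fin_edges: "finite (graph_edges E)"
proof -
  have "graph_edges E \<subseteq> Pow V" using edge_V by blast
  then show ?thesis using sg(1) finite_subset by blast
qed

lemma fin_Vs: "finite (Gp_verts V E)"
proof -
  have "Gp_verts V E \<subseteq> Orig ` V \<union> (\<lambda>(x,e). WX x e) ` (V \<times> graph_edges E) \<union> WE ` graph_edges E
     \<union> (\<lambda>(x,e). Z x e) ` (V \<times> graph_edges E)" unfolding Gp_verts_def using edge_V by fastforce
  then show ?thesis using sg(1) fin_edges by (meson finite_Un finite_SigmaI finite_imageI finite_subset)
qed

lemma incident: "x \<in> V \<Longrightarrow> {f. f \<in> graph_edges E \<and> x \<in> f} = (\<lambda>y. {x,y}) ` {y. E x y}"
  using edge_other edge_eq by fastforce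

lemma fin_nb: "finite {y. E x y}"
  using sg(1) sg(3) by (metis finite_subset mem_Collect_eq subsetI)

lemma other_card: assumes "e \<in> graph_edges E" "x \<in> e"
  shows "card {f. f \<in> graph_edges E \<and> x \<in> f \<and> f \<noteq> e} \<le> 2"
proof -
  have xV: "x \<in> V" using assms edge_V by blast
  have eq: "{f. f \<in> graph_edges E \<and> x \<in> f \<and> f \<noteq> e} = {f. f \<in> graph_edges E \<and> x \<in> f} - {e}" by blast
  have "card {f. f \<in> graph_edges E \<and> x \<in> f} \<le> 3"
    unfolding incident[OF xV] using deg[OF xV] fin_nb card_image_le by metis
  moreover have "finite {f. f \<in> graph_edges E \<and> x \<in> f}" using fin_edges by simp
  moreover have "e \<in> {f. f \<in> graph_edges E \<and> x \<in> f}" using assms by simp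
  ultimately show ?thesis unfolding eq by (simp add: card_Diff_singleton)
qed

lemma two_other: assumes "e \<in> graph_edges E" "x \<in> e"
  shows "\<exists>f g. f \<in> graph_edges E \<and> g \<in> graph_edges E \<and> x \<in> f \<and> x \<in> g \<and> f \<noteq> e \<and> g \<noteq> e \<and> f \<noteq> g"
proof -
  obtain y0 where y0: "e = {x,y0}" "E x y0" using edge_other assms by blast
  have xV: "x \<in> V" using assms edge_V by blast
  have "card ({y. E x y} - {y0}) = 2" using deg[OF xV] fin_nb y0(2) by (simp add: card_Diff_singleton)
  then obtain y1 y2 where y: "y1 \<noteq> y2" "{y. E x y} - {y0} = {y1,y2}" by (meson card_2_iff)
  then have h: "E x y1" "E x y2" "y1 \<noteq> y0" "y2 \<noteq> y0" by blast+
  have n: "x \<noteq> y1" "x \<noteq> y2" "x \<noteq> y0" using h y0 sg(5) by metis+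
  have d1: "{x,y1} \<noteq> e" unfolding y0(1)
  proof
    assume "{x,y1} = {x,y0}" then have "y1 \<in> {x,y0}" by blast
    then show False using n h by blast
  qed
  have d2: "{x,y2} \<noteq> e" unfolding y0(1)
  proof
    assume "{x,y2} = {x,y0}" then have "y2 \<in> {x,y0}" by blast
    then show False using n h by blast
  qed
  have d3: "{x,y1} \<noteq> {x,y2}"
  proof
    assume "{x,y1} = {x,y2}" then have "y1 \<in> {x,y2}" by blast
    then show False using n y(1) by blast
  qed
  show ?thesis using d1 d2 d3 edge_eq[OF h(1)] edge_eq[OF h(2)] by blast
qed


lemma N1:
  assumes vcs: "vector_connectivity_set (Gp_verts V E) (Gp_adj E) Gp_r T"
    and e: "e \<in> graph_edges E" "e = {x,y}" and nW: "WE e \<notin> T"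
  shows "Z x e \<in> T \<or> Z y e \<in> T"
proof (rule ccontr)
  assume nz: "\<not> (Z x e \<in> T \<or> Z y e \<in> T)"
  have "WE e \<in> Gp_verts V E" using verts e by blast
  then have "k_linked (Gp_verts V E) (Gp_adj E) (Gp_r (WE e)) (WE e) T"
    using vcs nW unfolding vector_connectivity_set_def by blast
  then obtain ps where fan: "is_fan (Gp_verts V E) (Gp_adj E) (WE e) T 3 ps"
    unfolding k_linked_def by auto
  let ?C = "{WX x e, WX y e}"
  have "\<forall>p\<in>set ps. set p \<inter> ?C \<noteq> {}"
  proof
    fix p assume "p \<in> set ps"
    then have pp: "is_path (Gp_verts V E) (Gp_adj E) p" "hd p = WE e" "last p \<in> T"
      using fan unfolding is_fan_def by auto
    from path_second[OF pp nW] have s: "Gp_adj E (WE e) (p!1)" "p!1 \<in> set p" by auto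
    from adj_WE[OF s(1)] obtain u where u: "u \<in> e" "p!1 = WX u e \<or> p!1 = Z u e" by blast
    have ux: "u = x \<or> u = y" using u(1) e(2) by blast
    show "set p \<inter> ?C \<noteq> {}"
    proof (cases "p!1 = WX u e")
      case True then show ?thesis using s ux by auto
    next
      case False
      then have z: "p!1 = Z u e" using u by auto
      then have "p!1 \<notin> T" using nz ux by auto
      from path_third[OF pp nW this] have t: "Gp_adj E (p!1) (p!2)" "p!2 \<noteq> WE e" "p!2 \<in> set p" by auto
      then have "p!2 = WX u e" using adj_Z z by metis
      then show ?thesis using t(3) ux by auto
    qed
  qed
  from fan_cut[OF fan _ _ this] have "3 \<le> card ?C" by auto
  moreover have "card ?C \<le> 2" by (cases "WX x e = WX y e") auto
  ultimately show False by simp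
qed

lemma N2:
  assumes vcs: "vector_connectivity_set (Gp_verts V E) (Gp_adj E) Gp_r T"
    and e: "e \<in> graph_edges E" "x \<in> e" and nW: "WX x e \<notin> T" and nO: "Orig x \<notin> T"
  shows "Z x e \<in> T"
proof (rule ccontr)
  assume nz: "Z x e \<notin> T"
  have "WX x e \<in> Gp_verts V E" using verts e by blast
  then have "k_linked (Gp_verts V E) (Gp_adj E) (Gp_r (WX x e)) (WX x e) T"
    using vcs nW unfolding vector_connectivity_set_def by blast
  then obtain ps where fan: "is_fan (Gp_verts V E) (Gp_adj E) (WX x e) T 4 ps"
    unfolding k_linked_def by auto
  let ?F = "{f. f \<in> graph_edges E \<and> x \<in> f \<and> f \<noteq> e}"
  let ?C = "insert (WE e) (WX x ` ?F)"
  have finF: "finite ?F" using fin_edges by simp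
  have "\<forall>p\<in>set ps. set p \<inter> ?C \<noteq> {}"
  proof
    fix p assume "p \<in> set ps"
    then have pp: "is_path (Gp_verts V E) (Gp_adj E) p" "hd p = WX x e" "last p \<in> T"
      using fan unfolding is_fan_def by auto
    from path_second[OF pp nW] have s: "Gp_adj E (WX x e) (p!1)" "p!1 \<in> set p" by auto
    from adj_WX[OF s(1)]
    consider "p!1 = Orig x" | "p!1 = WE e" | "p!1 = Z x e" | "\<exists>f. p!1 = WX x f \<and> f \<in> graph_edges E \<and> x \<in> f \<and> f \<noteq> e"
      by blast
    then show "set p \<inter> ?C \<noteq> {}"
    proof cases
      case 1
      then have "p!1 \<notin> T" using nO by simp
      from path_third[OF pp nW this] have t: "Gp_adj E (p!1) (p!2)" "p!2 \<noteq> WX x e" "p!2 \<in> set p" by auto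
      then obtain f where "p!2 = WX x f" "f \<in> graph_edges E" "x \<in> f" using adj_Orig 1 by metis
      then show ?thesis using t by auto
    next
      case 2 then show ?thesis using s by auto
    next
      case 3
      then have "p!1 \<notin> T" using nz by simp
      from path_third[OF pp nW this] have t: "Gp_adj E (p!1) (p!2)" "p!2 \<noteq> WX x e" "p!2 \<in> set p" by auto
      then have "p!2 = WE e" using adj_Z 3 by metis
      then show ?thesis using t by auto
    next
      case 4 then show ?thesis using s by auto
    qed
  qed
  from fan_cut[OF fan _ _ this] have "4 \<le> card ?C" using finF by auto
  moreover have "card ?C \<le> Suc (card (WX x ` ?F))" by (simp add: card_insert_le_m1 card_insert_if)
  moreover have "card (WX x ` ?F) \<le> 2" using card_image_le[OF finF, of "WX x"] other_card[OF e] by linarith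
  ultimately show False by linarith
qed


context
  fixes S
  assumes Ssub: "S \<subseteq> Gp_verts V E"
  and c1: "\<forall>e\<in>graph_edges E. \<forall>x\<in>e. Orig x \<in> S \<or> Z x e \<in> S"
  and c2: "\<forall>e\<in>graph_edges E. \<forall>x\<in>e. \<forall>y\<in>e. x \<noteq> y \<longrightarrow> Z x e \<in> S \<or> Z y e \<in> S"
begin

lemma esc: assumes f: "f \<in> graph_edges E" "x \<in> f"
  shows "\<exists>p. is_path (Gp_verts V E) (Gp_adj E) p \<and> hd p = WX x f \<and> last p \<in> S \<and> set p \<subseteq> {t. eo t = Some f}"
proof -
  obtain y where y: "f = {x,y}" "E x y" using edge_other f by blast
  have xy: "x \<noteq> y" using y(2) sg(5) by blast
  have yf: "y \<in> f" using y by blast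
  show ?thesis
  proof (cases "Z x f \<in> S")
    case True
    have "is_path (Gp_verts V E) (Gp_adj E) [WX x f, Z x f]" by (rule path2) (auto simp: verts adjI f)
    then show ?thesis using True by (intro exI[of _ "[WX x f, Z x f]"]) auto
  next
    case False
    then have zy: "Z y f \<in> S" using c2 f yf xy by blast
    have "is_path (Gp_verts V E) (Gp_adj E) [WX x f, WE f, Z y f]" by (rule path3) (auto simp: verts adjI f yf)
    then show ?thesis using zy by (intro exI[of _ "[WX x f, WE f, Z y f]"]) auto
  qed
qed

lemma aside: assumes e: "e \<in> graph_edges E" "x \<in> e"
  shows "\<exists>p1 p2. is_path (Gp_verts V E) (Gp_adj E) p1 \<and> is_path (Gp_verts V E) (Gp_adj E) p2 \<and>
     hd p1 = WX x e \<and> hd p2 = WX x e \<and> last p1 \<in> S \<and> last p2 \<in> S \<and> set p1 \<inter> set p2 = {WX x e} \<and>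
     set p1 \<subseteq> insert (WX x e) {t. eo t = Some e \<or> eo t = None} \<and>
     set p2 \<subseteq> insert (WX x e) {t. eo t = Some e \<or> eo t = None}"
proof -
  obtain y where y: "e = {x,y}" "E x y" using edge_other e by blast
  have xy: "x \<noteq> y" using y(2) sg(5) by blast
  have ye: "y \<in> e" using y by blast
  have xV: "x \<in> V" "y \<in> V" using e ye edge_V by blast+
  show ?thesis
  proof (cases "Orig x \<in> S")
    case True
    have p1: "is_path (Gp_verts V E) (Gp_adj E) [WX x e, Orig x]" by (rule path2) (auto simp: verts adjI e xV)
    show ?thesis
    proof (cases "Z x e \<in> S")
      case True
      have "is_path (Gp_verts V E) (Gp_adj E) [WX x e, Z x e]" by (rule path2) (auto simp: verts adjI e)
      then show ?thesis using p1 True \<open>Orig x \<in> S\<close>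
        by (intro exI[of _ "[WX x e, Orig x]"] exI[of _ "[WX x e, Z x e]"]) auto
    next
      case False
      then have zy: "Z y e \<in> S" using c2 e ye xy by blast
      have "is_path (Gp_verts V E) (Gp_adj E) [WX x e, WE e, Z y e]" by (rule path3) (auto simp: verts adjI e ye)
      then show ?thesis using p1 zy \<open>Orig x \<in> S\<close>
        by (intro exI[of _ "[WX x e, Orig x]"] exI[of _ "[WX x e, WE e, Z y e]"]) auto
    qed
  next
    case False
    then have zx: "Z x e \<in> S" using c1 e by blast
    have p1: "is_path (Gp_verts V E) (Gp_adj E) [WX x e, Z x e]" by (rule path2) (auto simp: verts adjI e)
    show ?thesis
    proof (cases "Z y e \<in> S")
      case True
      have "is_path (Gp_verts V E) (Gp_adj E) [WX x e, WE e, Z y e]" by (rule path3) (auto simp: verts adjI e ye)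
      then show ?thesis using p1 zx True xy
        by (intro exI[of _ "[WX x e, Z x e]"] exI[of _ "[WX x e, WE e, Z y e]"]) auto
    next
      case False
      then have oy: "Orig y \<in> S" using c1 e ye by blast
      have "is_path (Gp_verts V E) (Gp_adj E) [WX x e, WE e, WX y e, Orig y]"
        by (rule path4) (auto simp: verts adjI e ye xV xy)
      then show ?thesis using p1 zx oy xy
        by (intro exI[of _ "[WX x e, Z x e]"] exI[of _ "[WX x e, WE e, WX y e, Orig y]"]) auto
    qed
  qed
qed

lemma WX_fan: assumes e: "e \<in> graph_edges E" "x \<in> e"
  shows "k_linked (Gp_verts V E) (Gp_adj E) 4 (WX x e) S"
proof -
  let ?a = "WX x e"
  obtain p1 p2 where p: "is_path (Gp_verts V E) (Gp_adj E) p1" "is_path (Gp_verts V E) (Gp_adj E) p2"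
     "hd p1 = ?a" "hd p2 = ?a" "last p1 \<in> S" "last p2 \<in> S" "set p1 \<inter> set p2 = {?a}"
     "set p1 \<subseteq> insert ?a {t. eo t = Some e \<or> eo t = None}"
     "set p2 \<subseteq> insert ?a {t. eo t = Some e \<or> eo t = None}"
    using aside[OF e] by blast
  obtain f g where fg: "f \<in> graph_edges E" "g \<in> graph_edges E" "x \<in> f" "x \<in> g" "f \<noteq> e" "g \<noteq> e" "f \<noteq> g"
    using two_other[OF e] by blast
  obtain q3 where q3: "is_path (Gp_verts V E) (Gp_adj E) q3" "hd q3 = WX x f" "last q3 \<in> S" "set q3 \<subseteq> {t. eo t = Some f}"
    using esc[OF fg(1,3)] by blast
  obtain q4 where q4: "is_path (Gp_verts V E) (Gp_adj E) q4" "hd q4 = WX x g" "last q4 \<in> S" "set q4 \<subseteq> {t. eo t = Some g}"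
    using esc[OF fg(2,4)] by blast
  have ne: "q3 \<noteq> []" "q4 \<noteq> []" "p1 \<noteq> []" "p2 \<noteq> []" using q3(1) q4(1) p(1,2) by (auto simp: is_path_def)
  have aV: "?a \<in> Gp_verts V E" using verts e by blast
  have a3: "?a \<notin> set q3" using q3(4) fg(5) by auto
  have a4: "?a \<notin> set q4" using q4(4) fg(6) by auto
  have P3: "is_path (Gp_verts V E) (Gp_adj E) (?a # q3)"
    by (rule path_cons[OF q3(1) aV a3]) (use adjI(9)[OF e(1) fg(1) e(2) fg(3)] fg(5) q3(2) in auto)
  have P4: "is_path (Gp_verts V E) (Gp_adj E) (?a # q4)"
    by (rule path_cons[OF q4(1) aV a4]) (use adjI(9)[OF e(1) fg(2) e(2) fg(4)] fg(6) q4(2) in auto)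
  have l3: "last (?a # q3) \<in> S" using q3(3) ne by simp
  have l4: "last (?a # q4) \<in> S" using q4(3) ne by simp
  have in1: "?a \<in> set p1" "?a \<in> set p2" using p(3,4) ne hd_in_set by metis+
  have s3: "set (?a # q3) \<subseteq> insert ?a {t. eo t = Some f}" using q3(4) by auto
  have s4: "set (?a # q4) \<subseteq> insert ?a {t. eo t = Some g}" using q4(4) by auto
  have d13: "set p1 \<inter> set (?a # q3) = {?a}"
    by (rule disj_helper[OF in1(1) _ p(8) s3]) (use fg in auto)
  have d23: "set p2 \<inter> set (?a # q3) = {?a}"
    by (rule disj_helper[OF in1(2) _ p(9) s3]) (use fg in auto)
  have d14: "set p1 \<inter> set (?a # q4) = {?a}"
    by (rule disj_helper[OF in1(1) _ p(8) s4]) (use fg in auto)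
  have d24: "set p2 \<inter> set (?a # q4) = {?a}"
    by (rule disj_helper[OF in1(2) _ p(9) s4]) (use fg in auto)
  have d34: "set (?a # q3) \<inter> set (?a # q4) = {?a}"
    by (rule disj_helper[OF _ _ s3 s4]) (use fg in auto)
  have "is_fan (Gp_verts V E) (Gp_adj E) ?a S 4 [p1, p2, ?a # q3, ?a # q4]"
    by (rule fan4I) (use p P3 P4 l3 l4 d13 d23 d14 d24 d34 in auto)
  then show ?thesis unfolding k_linked_def by blast
qed

lemma side: assumes e: "e \<in> graph_edges E" "x \<in> e"
  shows "\<exists>p. is_path (Gp_verts V E) (Gp_adj E) p \<and> hd p = WE e \<and> last p \<in> S \<and>
     set p \<subseteq> insert (WE e) {t. own t = Some x \<and> t \<noteq> Z x e}"
proof -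
  have xV: "x \<in> V" using e edge_V by blast
  show ?thesis
  proof (cases "Orig x \<in> S")
    case True
    have "is_path (Gp_verts V E) (Gp_adj E) [WE e, WX x e, Orig x]" by (rule path3) (auto simp: verts adjI e xV)
    then show ?thesis using True by (intro exI[of _ "[WE e, WX x e, Orig x]"]) auto
  next
    case False
    obtain f where f: "f \<in> graph_edges E" "x \<in> f" "f \<noteq> e" using two_other[OF e] by blast
    have zf: "Z x f \<in> S" using c1 f False by blast
    have fe: "e \<noteq> f" using f(3) by blast
    have aef: "Gp_adj E (WX x e) (WX x f)" using adjI(9)[OF e(1) f(1) e(2) f(2) fe] .
    have "is_path (Gp_verts V E) (Gp_adj E) [WE e, WX x e, WX x f, Z x f]"
      by (rule path4) (use f fe aef in \<open>auto simp: verts adjI e\<close>)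
    then show ?thesis using zf f by (intro exI[of _ "[WE e, WX x e, WX x f, Z x f]"]) auto
  qed
qed

lemma WE_fan: assumes e: "e \<in> graph_edges E"
  shows "k_linked (Gp_verts V E) (Gp_adj E) 3 (WE e) S"
proof -
  obtain x y where y: "e = {x,y}" "E x y" using e unfolding graph_edges_def by blast
  have xy: "x \<noteq> y" using y(2) sg(5) by blast
  have xe: "x \<in> e" "y \<in> e" using y by blast+
  obtain u where u: "u = x \<or> u = y" "Z u e \<in> S" using c2 e xe xy by blast
  obtain p1 where p1: "is_path (Gp_verts V E) (Gp_adj E) p1" "hd p1 = WE e" "last p1 \<in> S"
     "set p1 \<subseteq> insert (WE e) {t. own t = Some x \<and> t \<noteq> Z x e}" using side[OF e xe(1)] by blast
  obtain p2 where p2: "is_path (Gp_verts V E) (Gp_adj E) p2" "hd p2 = WE e" "last p2 \<in> S"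
     "set p2 \<subseteq> insert (WE e) {t. own t = Some y \<and> t \<noteq> Z y e}" using side[OF e xe(2)] by blast
  have ue: "u \<in> e" using u xe by blast
  have p3: "is_path (Gp_verts V E) (Gp_adj E) [WE e, Z u e]" by (rule path2) (auto simp: verts adjI e ue)
  have s3: "set [WE e, Z u e] \<subseteq> insert (WE e) {t. t = Z u e}" by auto
  have ne: "p1 \<noteq> []" "p2 \<noteq> []" using p1(1) p2(1) by (auto simp: is_path_def)
  have in1: "WE e \<in> set p1" "WE e \<in> set p2" using p1(2) p2(2) ne hd_in_set by metis+
  have d12: "set p1 \<inter> set p2 = {WE e}"
    by (rule disj_helper[OF in1(1) in1(2) p1(4) p2(4)]) (use xy in auto)
  have d13: "set p1 \<inter> set [WE e, Z u e] = {WE e}"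
    by (rule disj_helper[OF in1(1) _ p1(4) s3]) (use xy u in auto)
  have d23: "set p2 \<inter> set [WE e, Z u e] = {WE e}"
    by (rule disj_helper[OF in1(2) _ p2(4) s3]) (use xy u in auto)
  have "is_fan (Gp_verts V E) (Gp_adj E) (WE e) S 3 [p1, p2, [WE e, Z u e]]"
    by (rule fan3I) (use p1 p2 p3 u d12 d13 d23 in auto)
  then show ?thesis unfolding k_linked_def by blast
qed

lemma suff: "vector_connectivity_set (Gp_verts V E) (Gp_adj E) Gp_r S"
  unfolding vector_connectivity_set_def
proof (intro conjI ballI)
  show "S \<subseteq> Gp_verts V E" by (rule Ssub)
  fix v assume v: "v \<in> Gp_verts V E - S"
  show "k_linked (Gp_verts V E) (Gp_adj E) (Gp_r v) v S"
  proof (cases v)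
    case (Orig x) then show ?thesis using k0 by simp
  next
    case (WX x e)
    then have "e \<in> graph_edges E" "x \<in> e" using v unfolding Gp_verts_def by auto
    then show ?thesis using WX_fan WX by simp
  next
    case (WE e)
    then have "e \<in> graph_edges E" using v unfolding Gp_verts_def by auto
    then show ?thesis using WE_fan WE by simp
  next
    case (Z x e) then show ?thesis using k0 by simp
  qed
qed

end


definition Sst :: "'a gvert set \<Rightarrow> 'a gvert set" where
  "Sst T = (T \<inter> range Orig) \<union> {Z x e | x e. e \<in> graph_edges E \<and> x \<in> e \<and>
      (Orig x \<notin> T \<or> ((\<forall>u\<in>e. Orig u \<in> T) \<and> x = (SOME u. u \<in> e)))}"

lemma Sst_Z: "Z x e \<in> Sst T \<longleftrightarrow> e \<in> graph_edges E \<and> x \<in> e \<and>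
      (Orig x \<notin> T \<or> ((\<forall>u\<in>e. Orig u \<in> T) \<and> x = (SOME u. u \<in> e)))"
  by (auto simp: Sst_def)

lemma Sst_Orig: "Orig x \<in> Sst T \<longleftrightarrow> Orig x \<in> T"
  by (auto simp: Sst_def)

lemma Sst_cases: "v \<in> Sst T \<Longrightarrow> (\<exists>x. v = Orig x) \<or> (\<exists>x e. v = Z x e)"
  by (auto simp: Sst_def)

lemma Sst_vcs: assumes vcs: "vector_connectivity_set (Gp_verts V E) (Gp_adj E) Gp_r T"
  shows "vector_connectivity_set (Gp_verts V E) (Gp_adj E) Gp_r (Sst T)"
proof (rule suff)
  have TV: "T \<subseteq> Gp_verts V E" using vcs unfolding vector_connectivity_set_def by blast
  show "Sst T \<subseteq> Gp_verts V E" using TV verts unfolding Sst_def by blast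
  show "\<forall>e\<in>graph_edges E. \<forall>x\<in>e. Orig x \<in> Sst T \<or> Z x e \<in> Sst T"
    by (auto simp: Sst_Z Sst_Orig)
  show "\<forall>e\<in>graph_edges E. \<forall>x\<in>e. \<forall>y\<in>e. x \<noteq> y \<longrightarrow> Z x e \<in> Sst T \<or> Z y e \<in> Sst T"
  proof (intro ballI impI)
    fix e x y assume e: "e \<in> graph_edges E" "x \<in> e" "y \<in> e" "x \<noteq> y"
    show "Z x e \<in> Sst T \<or> Z y e \<in> Sst T"
    proof (cases "Orig x \<in> T \<and> Orig y \<in> T")
      case False then show ?thesis using e by (auto simp: Sst_Z)
    next
      case True
      obtain y' where "e = {x,y'}" using edge_other e by blast
      then have exy: "e = {x,y}" using e by blast
      then have all: "\<forall>u\<in>e. Orig u \<in> T" using True by blast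
      have "(SOME u. u \<in> e) \<in> e" using e(2) by (rule someI)
      then have "(SOME u. u \<in> e) = x \<or> (SOME u. u \<in> e) = y" using exy by blast
      then show ?thesis using e all by (auto simp: Sst_Z)
    qed
  qed
qed

definition gmap :: "'a gvert set \<Rightarrow> 'a gvert \<Rightarrow> 'a gvert" where
  "gmap T v = (case v of Z x e \<Rightarrow> (SOME t. t \<in> T \<and> eo t = Some e \<and> (Orig x \<notin> T \<longrightarrow> t = Z x e \<or> t = WX x e))
     | _ \<Rightarrow> v)"

lemma g_ok: assumes vcs: "vector_connectivity_set (Gp_verts V E) (Gp_adj E) Gp_r T"
  and z: "Z x e \<in> Sst T"
  shows "gmap T (Z x e) \<in> T \<and> eo (gmap T (Z x e)) = Some e \<and>
     (Orig x \<notin> T \<longrightarrow> gmap T (Z x e) = Z x e \<or> gmap T (Z x e) = WX x e)"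
proof -
  have zz: "e \<in> graph_edges E" "x \<in> e" "Orig x \<notin> T \<or> ((\<forall>u\<in>e. Orig u \<in> T) \<and> x = (SOME u. u \<in> e))"
    using z by (auto simp: Sst_Z)
  have "\<exists>t. t \<in> T \<and> eo t = Some e \<and> (Orig x \<notin> T \<longrightarrow> t = Z x e \<or> t = WX x e)"
  proof (cases "Orig x \<in> T")
    case False
    then have "WX x e \<in> T \<or> Z x e \<in> T" using N2[OF vcs zz(1,2)] by blast
    then show ?thesis by auto
  next
    case True
    obtain y where "e = {x,y}" using edge_other zz by blast
    then have "WE e \<in> T \<or> Z x e \<in> T \<or> Z y e \<in> T" using N1[OF vcs zz(1)] by blast
    then show ?thesis using True by auto
  qed
  then have "(\<lambda>t. t \<in> T \<and> eo t = Some e \<and> (Orig x \<notin> T \<longrightarrow> t = Z x e \<or> t = WX x e))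
     (SOME t. t \<in> T \<and> eo t = Some e \<and> (Orig x \<notin> T \<longrightarrow> t = Z x e \<or> t = WX x e))"
    by (rule someI_ex)
  moreover have gm: "gmap T (Z x e) = (SOME t. t \<in> T \<and> eo t = Some e \<and> (Orig x \<notin> T \<longrightarrow> t = Z x e \<or> t = WX x e))"
    by (simp add: gmap_def)
  ultimately show ?thesis unfolding gm by blast
qed

lemma Sst_card: assumes vcs: "vector_connectivity_set (Gp_verts V E) (Gp_adj E) Gp_r T"
  shows "card (Sst T) \<le> card T"
proof -
  have TV: "T \<subseteq> Gp_verts V E" using vcs unfolding vector_connectivity_set_def by blast
  then have finT: "finite T" using fin_Vs finite_subset by blast
  have img: "gmap T ` Sst T \<subseteq> T"
  proof
    fix t assume "t \<in> gmap T ` Sst T"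
    then obtain v where v: "v \<in> Sst T" "t = gmap T v" by blast
    from Sst_cases[OF v(1)] show "t \<in> T"
    proof
      assume "\<exists>x. v = Orig x"
      then obtain x where "v = Orig x" by blast
      then show ?thesis using v by (simp add: gmap_def Sst_Orig)
    next
      assume "\<exists>x e. v = Z x e"
      then obtain x e where "v = Z x e" by blast
      then show ?thesis using v g_ok[OF vcs] by blast
    qed
  qed
  have inj: "inj_on (gmap T) (Sst T)"
  proof (rule inj_onI)
    fix v w assume vw: "v \<in> Sst T" "w \<in> Sst T" "gmap T v = gmap T w"
    show "v = w"
    proof (cases "\<exists>x. v = Orig x")
      case True
      then obtain x where x: "v = Orig x" by blast
      show ?thesis
      proof (cases "\<exists>x. w = Orig x")
        case True
        then show ?thesis using x vw by (auto simp: gmap_def)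
      next
        case False
        then obtain x' e' where w: "w = Z x' e'" using Sst_cases[OF vw(2)] by blast
        have "eo (gmap T w) = Some e'" using g_ok[OF vcs] vw(2) w by blast
        moreover have "eo (gmap T v) = None" using x by (simp add: gmap_def)
        ultimately show ?thesis using vw(3) by simp
      qed
    next
      case False
      then obtain x e where v: "v = Z x e" using Sst_cases[OF vw(1)] by blast
      show ?thesis
      proof (cases "\<exists>x. w = Orig x")
        case True
        then obtain x' where w: "w = Orig x'" by blast
        have "eo (gmap T v) = Some e" using g_ok[OF vcs] vw(1) v by blast
        moreover have "eo (gmap T w) = None" using w by (simp add: gmap_def)
        ultimately show ?thesis using vw(3) by simp
      next
        case False
        then obtain x' e' where w: "w = Z x' e'" using Sst_cases[OF vw(2)] by blast
        have gv: "gmap T v \<in> T \<and> eo (gmap T v) = Some e \<and> (Orig x \<notin> T \<longrightarrow> gmap T v = Z x e \<or> gmap T v = WX x e)"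
          using g_ok[OF vcs] vw(1) v by blast
        have gw: "gmap T w \<in> T \<and> eo (gmap T w) = Some e' \<and> (Orig x' \<notin> T \<longrightarrow> gmap T w = Z x' e' \<or> gmap T w = WX x' e')"
          using g_ok[OF vcs] vw(2) w by blast
        have ee: "e = e'" using gv gw vw(3) by simp
        have cv: "x \<in> e" "Orig x \<notin> T \<or> ((\<forall>u\<in>e. Orig u \<in> T) \<and> x = (SOME u. u \<in> e))"
          using vw(1) v by (auto simp: Sst_Z)
        have cw: "x' \<in> e" "Orig x' \<notin> T \<or> ((\<forall>u\<in>e. Orig u \<in> T) \<and> x' = (SOME u. u \<in> e))"
          using vw(2) w ee by (auto simp: Sst_Z)
        have "x = x'"
        proof (cases "Orig x \<in> T \<or> Orig x' \<in> T")
          case True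
          then have "\<forall>u\<in>e. Orig u \<in> T" using cv cw by blast
          then show ?thesis using cv cw by auto
        next
          case False
          then show ?thesis using gv gw vw(3) ee by auto
        qed
        then show ?thesis using v w ee by simp
      qed
    qed
  qed
  have "card (Sst T) \<le> card T" using card_inj_on_le[OF inj img finT] .
  then show ?thesis .
qed

end

theorem mainTheorem5:
  fixes V :: "'a set" and E :: "'a \<Rightarrow> 'a \<Rightarrow> bool"
  assumes "cubic_graph V E"
  shows "\<exists>S. vector_connectivity_set (Gp_verts V E) (Gp_adj E) Gp_r S \<and>
             (\<forall>T. vector_connectivity_set (Gp_verts V E) (Gp_adj E) Gp_r T \<longrightarrow> card S \<le> card T) \<and>
             (\<forall>x e. WX x e \<notin> S) \<and> (\<forall>e. WE e \<notin> S)"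
proof -
  interpret cg V E by (unfold_locales) (rule assms)
  have ex: "vector_connectivity_set (Gp_verts V E) (Gp_adj E) Gp_r (Gp_verts V E)"
    unfolding vector_connectivity_set_def by simp
  obtain T where T: "vector_connectivity_set (Gp_verts V E) (Gp_adj E) Gp_r T"
    "\<forall>T'. vector_connectivity_set (Gp_verts V E) (Gp_adj E) Gp_r T' \<longrightarrow> card T \<le> card T'"
    using ex_has_least_nat[of "\<lambda>T. vector_connectivity_set (Gp_verts V E) (Gp_adj E) Gp_r T" _ card] ex
    by blast
  have "(\<forall>x e. WX x e \<notin> Sst T) \<and> (\<forall>e. WE e \<notin> Sst T)" by (auto simp: Sst_def)
  moreover have "\<forall>T'. vector_connectivity_set (Gp_verts V E) (Gp_adj E) Gp_r T' \<longrightarrow> card (Sst T) \<le> card T'"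
    using Sst_card[OF T(1)] T(2) le_trans by blast
  ultimately show ?thesis using Sst_vcs[OF T(1)] by blast
qed

end
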